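(* Let $U$ be a reduced $\mathbb{Z}_pG$-lattice, identified with $\ker f\subseteq F=\bigoplus_{i\in I}F_{(i)}$ as below. Then $$I_NU\subseteq U\cap\Big(\bigoplus_{H\neq N,\ |H|=p}F_{(H)}\Big),$$ with equality if and only if $U_N$ is a $\mathbb{Z}_p$-lattice (i.e. $\mathbb{Z}_p$-torsion free).
   Context: Let $p$ be a prime and $G=C_p\times C_p=N\times C$, where $N=\langle n\rangle$ and $C=\langle c\rangle$ are cyclic of order $p$. A $\mathbb{Z}_pG$-lattice is a $\mathbb{Z}_pG$-module free of finite rank over $\mathbb{Z}_p$. For $H\le G$ write $\widehat H=\sum_{h\in H}h$ and $I_H$ for the augmentation ideal of $\mathbb{Z}_pH$ (generated by the $1-h$, $h\in H$). For a module $U$, $U_N=U/I_NU$. Let $I=\{0\}\cup\{H\le G:|H|=p\}$. Put $e_0=\frac1{p^2}\widehat G$ and $e_H=\frac1{p^2}(p\widehat H-\widehat G)$ for $|H|=p$ (the primitive idempotents of $\mathbb{Q}_pG$). For $i\in I$, $\Lambda_{(i)}=e_i\mathbb{Z}_pG$, regarded both as a ring (quotient of $\mathbb{Z}_pG$ via $x\mapsto e_ix$) and as a module. A lattice is reduced if it has no direct summand isomorphic to $\mathbb{Z}_pG$ or to any $\Lambda_{(i)}$. A diagram is a tuple $(V;V_{(i)},\,i\in I)$ where $V$ is a finitely generated $\mathbb{F}_pG$-module, each $V_{(i)}$ is a submodule, $\sum_{i\neq j}V_{(i)}=V$ for every $j\in I$, and the action of $\mathbb{Z}_pG$ on each $V_{(i)}$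 factors through $\mathbb{Z}_pG\to\Lambda_{(i)}$. The diagram of a reduced lattice $U$: with $U\subseteq\mathbb{Q}_p\otimes U$, $U_{(i)}=e_iU$, $U_*=\bigoplus_iU_{(i)}$, set $V=U_*/U$, $V_{(i)}=(U_{(i)}+U)/U$. Conversely, from a diagram one forms $F_{(i)}$ = direct sum of $\dim_{\mathbb{F}_p}(V_{(i)}/\mathrm{Rad}\,V_{(i)})$ copies of $\Lambda_{(i)}$, $F=\bigoplus_{i\in I}F_{(i)}$, surjective $\Lambda_{(i)}$-homomorphisms $f_i:F_{(i)}\to V_{(i)}$ inducing isomorphisms $F_{(i)}/\mathrm{Rad}\,F_{(i)}\to V_{(i)}/\mathrm{Rad}\,V_{(i)}$, and $f=\sum_i f_i:F\to V$; the reduced lattice of the diagram is $\ker f$. These constructions are mutually inverse up to isomorphism. Hence for a reduced lattice $U$ with diagram $V_*$ we fix such $F,f$ and identify $U=\ker f\subseteq F$; for $x\in F$, $\overline{x}=f(x)\in V$, and elements of $F$ are written $x=\sum_i x_i$ with $x_i\in F_{(i)}$. *)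

theory Defs
  imports Main "HOL-Computational_Algebra.Primes"
begin

section \<open>p-adic integers Z_p (as compatible residue sequences)\<close>

type_synonym zp = "nat \<Rightarrow> int"

definition Zp :: "nat \<Rightarrow> zp set" where
  "Zp p = {x. \<forall>k. 0 \<le> x k \<and> x k < int p ^ k \<and> x (Suc k) mod (int p ^ k) = x k}"

definition zp_of_int :: "nat \<Rightarrow> int \<Rightarrow> zp" where
  "zp_of_int p z = (\<lambda>k. z mod (int p ^ k))"

definition zp_zero :: zp where "zp_zero = (\<lambda>k. 0)"

definition zp_one :: "nat \<Rightarrow> zp" where "zp_one p = zp_of_int p 1"

definition zp_add :: "nat \<Rightarrow> zp \<Rightarrow> zp \<Rightarrow> zp" where
  "zp_add p x y = (\<lambda>k. (x k + y k) mod (int p ^ k))"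

definition zp_mul :: "nat \<Rightarrow> zp \<Rightarrow> zp \<Rightarrow> zp" where
  "zp_mul p x y = (\<lambda>k. (x k * y k) mod (int p ^ k))"

definition zp_sum :: "nat \<Rightarrow> ('a \<Rightarrow> zp) \<Rightarrow> 'a set \<Rightarrow> zp" where
  "zp_sum p f A = (\<lambda>k. (\<Sum>a\<in>A. f a k) mod (int p ^ k))"

section \<open>The group G = C_p x C_p = N x C\<close>

text \<open>(a,b) with a,b < p stands for n^a c^b.\<close>
type_synonym grp = "nat \<times> nat"

definition Gp :: "nat \<Rightarrow> grp set" where "Gp p = {..<p} \<times> {..<p}"

definition gmul :: "nat \<Rightarrow> grp \<Rightarrow> grp \<Rightarrow> grp" where
  "gmul p g h = ((fst g + fst h) mod p, (snd g + snd h) mod p)"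

definition gdiv :: "nat \<Rightarrow> grp \<Rightarrow> grp \<Rightarrow> grp" where
  "gdiv p g h = ((fst g + p - fst h) mod p, (snd g + p - snd h) mod p)"

definition Nsub :: "nat \<Rightarrow> grp set" where "Nsub p = {..<p} \<times> {0}"

text \<open>Subgroups of G of order p (a finite nonempty subset closed under the product is a subgroup).\<close>
definition subgroups_p :: "nat \<Rightarrow> grp set set" where
  "subgroups_p p = {H. H \<subseteq> Gp p \<and> (0,0) \<in> H \<and> (\<forall>x\<in>H. \<forall>y\<in>H. gmul p x y \<in> H) \<and> card H = p}"

text \<open>Index set I = {0} u {H : |H| = p}; None encodes the index 0, Some H the subgroup H.\<close>
type_synonym ix = "grp set option"

definition Ip :: "nat \<Rightarrow> ix set" where "Ip p = insert None (Some ` subgroups_p p)"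

type_synonym zpg = "grp \<Rightarrow> zp"

definition ZpG :: "nat \<Rightarrow> zpg set" where
  "ZpG p = {r. \<forall>g. (g \<in> Gp p \<longrightarrow> r g \<in> Zp p) \<and> (g \<notin> Gp p \<longrightarrow> r g = zp_zero)}"

definition zpg_zero :: zpg where "zpg_zero = (\<lambda>g. zp_zero)"

definition zpg_add :: "nat \<Rightarrow> zpg \<Rightarrow> zpg \<Rightarrow> zpg" where
  "zpg_add p r s = (\<lambda>g. if g \<in> Gp p then zp_add p (r g) (s g) else zp_zero)"

definition zpg_mul :: "nat \<Rightarrow> zpg \<Rightarrow> zpg \<Rightarrow> zpg" where
  "zpg_mul p r s = (\<lambda>g. if g \<in> Gp p
      then zp_sum p (\<lambda>h. zp_mul p (r h) (s (gdiv p g h))) (Gp p) else zp_zero)"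

definition zpg_const :: "zp \<Rightarrow> zpg" where
  "zpg_const a = (\<lambda>g. if g = (0,0) then a else zp_zero)"

definition IN :: "nat \<Rightarrow> zpg set" where
  "IN p = {r \<in> ZpG p. (\<forall>g. g \<notin> Nsub p \<longrightarrow> r g = zp_zero) \<and> zp_sum p r (Nsub p) = zp_zero}"

text \<open>w_i = p^2 e_i in Z_p G: w_0 = hat G, w_H = p hat H - hat G.\<close>
definition w :: "nat \<Rightarrow> ix \<Rightarrow> zpg" where
  "w p i = (\<lambda>g. if g \<notin> Gp p then zp_zero else
      (case i of None \<Rightarrow> zp_one p
        | Some H \<Rightarrow> (if g \<in> H then zp_of_int p (int p - 1) else zp_of_int p (-1))))"

text \<open>Lambda_(i) = e_i Z_p G, realised (isomorphically, via multiplication by p^2) as w_i Z_p G.\<close>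
definition Lam :: "nat \<Rightarrow> ix \<Rightarrow> zpg set" where
  "Lam p i = {zpg_mul p (w p i) r | r. r \<in> ZpG p}"

type_synonym fcomp = "nat \<Rightarrow> zpg"
type_synonym felt = "ix \<Rightarrow> fcomp"

definition Fcomp :: "nat \<Rightarrow> nat \<Rightarrow> ix \<Rightarrow> fcomp set" where
  "Fcomp p d i = {y. \<forall>k. (k < d \<longrightarrow> y k \<in> Lam p i) \<and> (d \<le> k \<longrightarrow> y k = zpg_zero)}"

definition fc_zero :: fcomp where "fc_zero = (\<lambda>k. zpg_zero)"

definition fc_add :: "nat \<Rightarrow> fcomp \<Rightarrow> fcomp \<Rightarrow> fcomp" where
  "fc_add p y z = (\<lambda>k. zpg_add p (y k) (z k))"

definition fc_smul :: "nat \<Rightarrow> zpg \<Rightarrow> fcomp \<Rightarrow> fcomp" where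
  "fc_smul p r y = (\<lambda>k. zpg_mul p r (y k))"

definition Fset :: "nat \<Rightarrow> (ix \<Rightarrow> nat) \<Rightarrow> felt set" where
  "Fset p d = {x. \<forall>i. (i \<in> Ip p \<longrightarrow> x i \<in> Fcomp p (d i) i) \<and> (i \<notin> Ip p \<longrightarrow> x i = fc_zero)}"

definition f_zero :: felt where "f_zero = (\<lambda>i. fc_zero)"

definition f_add :: "nat \<Rightarrow> felt \<Rightarrow> felt \<Rightarrow> felt" where
  "f_add p x y = (\<lambda>i. fc_add p (x i) (y i))"

definition f_smul :: "nat \<Rightarrow> zpg \<Rightarrow> felt \<Rightarrow> felt" where
  "f_smul p r x = (\<lambda>i. fc_smul p r (x i))"

definition nsm :: "nat \<Rightarrow> 'v::ab_group_add \<Rightarrow> 'v" where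
  "nsm m v = (\<Sum>j<m. v)"

definition gact :: "('v \<Rightarrow> 'v) \<Rightarrow> ('v \<Rightarrow> 'v) \<Rightarrow> grp \<Rightarrow> 'v \<Rightarrow> 'v" where
  "gact vn vc g v = (vn ^^ fst g) ((vc ^^ snd g) v)"

text \<open>Action of Z_p G on an F_p G-module (through Z_p G -> F_p G; r g 1 is the residue mod p).\<close>
definition vact :: "nat \<Rightarrow> ('v::ab_group_add \<Rightarrow> 'v) \<Rightarrow> ('v \<Rightarrow> 'v) \<Rightarrow> zpg \<Rightarrow> 'v \<Rightarrow> 'v" where
  "vact p vn vc r v = (\<Sum>g\<in>Gp p. nsm (nat (r g 1)) (gact vn vc g v))"

text \<open>V is a finitely generated (= finite) F_p G-module: a finite elementary abelian p-group with
  commuting additive actions of n and c of order dividing p.\<close>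
definition FpG_module :: "nat \<Rightarrow> 'v::ab_group_add set \<Rightarrow> ('v \<Rightarrow> 'v) \<Rightarrow> ('v \<Rightarrow> 'v) \<Rightarrow> bool" where
  "FpG_module p V vn vc \<longleftrightarrow> finite V \<and> 0 \<in> V \<and> (\<forall>x\<in>V. \<forall>y\<in>V. x + y \<in> V) \<and> (\<forall>x\<in>V. - x \<in> V)
     \<and> (\<forall>x\<in>V. nsm p x = 0)
     \<and> (\<forall>x\<in>V. vn x \<in> V \<and> vc x \<in> V)
     \<and> (\<forall>x\<in>V. \<forall>y\<in>V. vn (x + y) = vn x + vn y \<and> vc (x + y) = vc x + vc y)
     \<and> (\<forall>x\<in>V. (vn ^^ p) x = x \<and> (vc ^^ p) x = x \<and> vn (vc x) = vc (vn x))"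

definition vsub :: "('v::ab_group_add \<Rightarrow> 'v) \<Rightarrow> ('v \<Rightarrow> 'v) \<Rightarrow> 'v set \<Rightarrow> bool" where
  "vsub vn vc S \<longleftrightarrow> 0 \<in> S \<and> (\<forall>x\<in>S. \<forall>y\<in>S. x + y \<in> S) \<and> (\<forall>x\<in>S. vn x \<in> S \<and> vc x \<in> S)"

definition fsub :: "nat \<Rightarrow> fcomp set \<Rightarrow> bool" where
  "fsub p S \<longleftrightarrow> fc_zero \<in> S \<and> (\<forall>x\<in>S. \<forall>y\<in>S. fc_add p x y \<in> S)
     \<and> (\<forall>r\<in>ZpG p. \<forall>x\<in>S. fc_smul p r x \<in> S)"

definition max_sub :: "('a set \<Rightarrow> bool) \<Rightarrow> 'a set \<Rightarrow> 'a set \<Rightarrow> bool" where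
  "max_sub P M S \<longleftrightarrow> P S \<and> S \<subset> M \<and> (\<forall>T. P T \<and> S \<subseteq> T \<and> T \<subseteq> M \<longrightarrow> T = S \<or> T = M)"

definition Rad :: "('a set \<Rightarrow> bool) \<Rightarrow> 'a set \<Rightarrow> 'a set" where
  "Rad P M = M \<inter> \<Inter>{S. max_sub P M S}"

definition sum_subs :: "'i set \<Rightarrow> ('i \<Rightarrow> 'v::ab_group_add set) \<Rightarrow> 'v set" where
  "sum_subs J W = {\<Sum>i\<in>J. v i | v. \<forall>i\<in>J. v i \<in> W i}"

definition diagram :: "nat \<Rightarrow> 'v::ab_group_add set \<Rightarrow> ('v \<Rightarrow> 'v) \<Rightarrow> ('v \<Rightarrow> 'v) \<Rightarrow> (ix \<Rightarrow> 'v set) \<Rightarrow> bool" where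
  "diagram p V vn vc Vi \<longleftrightarrow> FpG_module p V vn vc
     \<and> (\<forall>i\<in>Ip p. Vi i \<subseteq> V \<and> vsub vn vc (Vi i))
     \<and> (\<forall>j\<in>Ip p. sum_subs (Ip p - {j}) Vi = V)
     \<and> (\<forall>i\<in>Ip p. \<forall>r\<in>ZpG p. zpg_mul p (w p i) r = zpg_zero \<longrightarrow> (\<forall>v\<in>Vi i. vact p vn vc r v = 0))"

text \<open>f_i : F_(i) -> V_(i) surjective Lambda_(i)-homomorphism inducing an isomorphism
  F_(i)/Rad F_(i) -> V_(i)/Rad V_(i).\<close>
definition good_cover :: "nat \<Rightarrow> nat \<Rightarrow> ix \<Rightarrow> ('v::ab_group_add \<Rightarrow> 'v) \<Rightarrow> ('v \<Rightarrow> 'v) \<Rightarrow> 'v set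
      \<Rightarrow> (fcomp \<Rightarrow> 'v) \<Rightarrow> bool" where
  "good_cover p d i vn vc W fi \<longleftrightarrow>
     fi ` Fcomp p d i = W
     \<and> (\<forall>x\<in>Fcomp p d i. \<forall>y\<in>Fcomp p d i. fi (fc_add p x y) = fi x + fi y)
     \<and> (\<forall>r\<in>ZpG p. \<forall>x\<in>Fcomp p d i. fi (fc_smul p r x) = vact p vn vc r (fi x))
     \<and> fi ` Rad (fsub p) (Fcomp p d i) \<subseteq> Rad (vsub vn vc) W
     \<and> (\<forall>x\<in>Fcomp p d i. fi x \<in> Rad (vsub vn vc) W \<longrightarrow> x \<in> Rad (fsub p) (Fcomp p d i))"

definition ftot :: "nat \<Rightarrow> (ix \<Rightarrow> fcomp \<Rightarrow> 'v::ab_group_add) \<Rightarrow> felt \<Rightarrow> 'v" where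
  "ftot p f x = (\<Sum>i\<in>Ip p. f i (x i))"

definition Uker :: "nat \<Rightarrow> (ix \<Rightarrow> nat) \<Rightarrow> (ix \<Rightarrow> fcomp \<Rightarrow> 'v::ab_group_add) \<Rightarrow> felt set" where
  "Uker p d f = {x \<in> Fset p d. ftot p f x = 0}"

inductive_set aug_prod :: "nat \<Rightarrow> zpg set \<Rightarrow> felt set \<Rightarrow> felt set" for p A U where
  zero: "f_zero \<in> aug_prod p A U"
| prod: "a \<in> A \<Longrightarrow> u \<in> U \<Longrightarrow> f_smul p a u \<in> aug_prod p A U"
| add: "x \<in> aug_prod p A U \<Longrightarrow> y \<in> aug_prod p A U \<Longrightarrow> f_add p x y \<in> aug_prod p A U"

text \<open>U_N = U / I_N U is Z_p-torsion free.\<close>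
definition UN_torsion_free :: "nat \<Rightarrow> felt set \<Rightarrow> bool" where
  "UN_torsion_free p U \<longleftrightarrow> (\<forall>a\<in>Zp p. a \<noteq> zp_zero \<longrightarrow>
      (\<forall>x\<in>U. f_smul p (zpg_const a) x \<in> aug_prod p (IN p) U \<longrightarrow> x \<in> aug_prod p (IN p) U))"

end

theory Submission
  imports Defs "HOL-Number_Theory.Cong"
begin


lemma Ldiff: "b \<le> a + (p::nat) \<Longrightarrow> int ((a + p - b) mod p) = (int a - int b) mod int p"
proof -
  assume "b \<le> a + p"
  hence "int (a + p - b) = int a - int b + int p" by simp
  hence "int ((a + p - b) mod p) = (int a - int b + int p) mod int p" by (metis zmod_int)
  thus ?thesis by simp
qed

lemma Lsum: "int ((a + b) mod (p::nat)) = (int a + int b) mod int p"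
  by (simp add: zmod_int)

lemma nat_eq_via_int: "int (x::nat) = int y \<Longrightarrow> x = y" by simp

lemma K1: "0 < (p::nat) \<Longrightarrow> a < p \<Longrightarrow> b < p \<Longrightarrow> (a + p - (a + p - b) mod p) mod p = b"
  apply (rule nat_eq_via_int)
  apply (subst Ldiff)
   apply (rule le_trans[OF mod_less_eq_dividend], simp)
  apply (subst Ldiff, simp)
  by (simp add: mod_diff_right_eq)

lemma K2: "0 < (p::nat) \<Longrightarrow> a < p \<Longrightarrow> b < p \<Longrightarrow> ((a + b) mod p + p - a) mod p = b"
  apply (rule nat_eq_via_int)
  apply (subst Ldiff, simp)
  apply (subst Lsum)
  by (metis add_diff_cancel_left' mod_diff_left_eq mod_pos_pos_trivial of_nat_0_le_iff of_nat_less_iff)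

lemma K3: "0 < (p::nat) \<Longrightarrow> a < p \<Longrightarrow> c < p \<Longrightarrow> (a + (c + p - a) mod p) mod p = c"
  apply (rule nat_eq_via_int)
  apply (subst Lsum)
  apply (subst Ldiff, simp)
  by (simp add: mod_add_right_eq)

lemma K4: "0 < (p::nat) \<Longrightarrow> a < p \<Longrightarrow> b < p \<Longrightarrow> (c + p - (a + b) mod p) mod p = ((c + p - a) mod p + p - b) mod p"
  apply (rule nat_eq_via_int)
  apply (subst Ldiff)
   apply (rule less_imp_le, rule less_le_trans[OF mod_less_divisor], simp, simp)
  apply (subst Ldiff, simp)
  apply (subst Ldiff, simp)
  apply (subst Lsum)
  by (simp add: mod_diff_right_eq mod_diff_left_eq diff_diff_eq)



lemma Gp_mem: "g \<in> Gp p \<longleftrightarrow> fst g < p \<and> snd g < p"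
  by (cases g) (auto simp: Gp_def)

lemma finite_Gp: "finite (Gp p)" by (simp add: Gp_def)

lemma gdiv_in: "0 < p \<Longrightarrow> gdiv p g h \<in> Gp p"
  by (simp add: Gp_mem gdiv_def)
lemma gmul_in: "0 < p \<Longrightarrow> gmul p g h \<in> Gp p"
  by (simp add: Gp_mem gmul_def)

lemma gdiv_gdiv: "0 < p \<Longrightarrow> g \<in> Gp p \<Longrightarrow> h \<in> Gp p \<Longrightarrow> gdiv p g (gdiv p g h) = h"
  by (cases g, cases h) (simp add: Gp_mem gdiv_def K1)
lemma gdiv_gmul: "0 < p \<Longrightarrow> h \<in> Gp p \<Longrightarrow> u \<in> Gp p \<Longrightarrow> gdiv p (gmul p h u) h = u"
  by (cases u, cases h) (simp add: Gp_mem gdiv_def gmul_def K2)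
lemma gmul_gdiv: "0 < p \<Longrightarrow> h \<in> Gp p \<Longrightarrow> g \<in> Gp p \<Longrightarrow> gmul p h (gdiv p g h) = g"
  by (cases g, cases h) (simp add: Gp_mem gdiv_def gmul_def K3)
lemma gdiv_assoc: "0 < p \<Longrightarrow> h \<in> Gp p \<Longrightarrow> u \<in> Gp p \<Longrightarrow> gdiv p g (gmul p h u) = gdiv p (gdiv p g h) u"
  by (cases u, cases h) (simp add: Gp_mem gdiv_def gmul_def K4)
lemma gdiv_zero: "g \<in> Gp p \<Longrightarrow> gdiv p g (0,0) = g"
  by (cases g) (simp add: Gp_mem gdiv_def)

definition conv :: "nat \<Rightarrow> (grp \<Rightarrow> int) \<Rightarrow> (grp \<Rightarrow> int) \<Rightarrow> grp \<Rightarrow> int" where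
  "conv p a b g = (\<Sum>h\<in>Gp p. a h * b (gdiv p g h))"

lemma conv_comm: "0 < p \<Longrightarrow> g \<in> Gp p \<Longrightarrow> conv p a b g = conv p b a g"
  unfolding conv_def
  apply (rule sum.reindex_bij_witness[where i="gdiv p g" and j="gdiv p g"])
  by (auto simp: gdiv_gdiv gdiv_in)

lemma conv_assoc: assumes p: "0 < p" and g: "g \<in> Gp p"
  shows "conv p a (conv p b c) g = conv p (conv p a b) c g"
proof -
  have "conv p (conv p a b) c g = (\<Sum>h'\<in>Gp p. \<Sum>h\<in>Gp p. a h * b (gdiv p h' h) * c (gdiv p g h'))"
    unfolding conv_def by (simp add: sum_distrib_right)
  also have "\<dots> = (\<Sum>h\<in>Gp p. \<Sum>h'\<in>Gp p. a h * b (gdiv p h' h) * c (gdiv p g h'))"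
    by (rule sum.swap)
  also have "\<dots> = (\<Sum>h\<in>Gp p. \<Sum>u\<in>Gp p. a h * b u * c (gdiv p (gdiv p g h) u))"
  proof (rule sum.cong[OF refl])
    fix h assume h: "h \<in> Gp p"
    show "(\<Sum>h'\<in>Gp p. a h * b (gdiv p h' h) * c (gdiv p g h')) =
          (\<Sum>u\<in>Gp p. a h * b u * c (gdiv p (gdiv p g h) u))"
      apply (rule sum.reindex_bij_witness[where i="gmul p h" and j="\<lambda>h'. gdiv p h' h"])
      using p h apply (auto simp: gdiv_gmul gmul_gdiv gdiv_in gmul_in gdiv_assoc)
      by (metis gdiv_assoc gdiv_in gmul_gdiv)
  qed
  also have "\<dots> = conv p a (conv p b c) g"
    unfolding conv_def by (simp add: sum_distrib_left mult.assoc)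
  finally show ?thesis by simp
qed

lemma conv_cong_mod:
  assumes p: "0 < p"
    and A: "\<forall>h\<in>Gp p. a h mod m = a' h mod m" and B: "\<forall>h\<in>Gp p. b h mod m = b' h mod m"
  shows "conv p a b g mod m = conv p a' b' g mod m"
proof -
  have "conv p a b g mod m = (\<Sum>h\<in>Gp p. a h * b (gdiv p g h) mod m) mod m"
    unfolding conv_def by (simp add: mod_sum_eq)
  also have "\<dots> = (\<Sum>h\<in>Gp p. a' h * b' (gdiv p g h) mod m) mod m"
    apply (rule arg_cong[where f="\<lambda>x. x mod m"], rule sum.cong[OF refl])
    using A B gdiv_in[OF p] by (metis mod_mult_eq)
  also have "\<dots> = conv p a' b' g mod m"
    unfolding conv_def by (simp add: mod_sum_eq)
  finally show ?thesis .
qed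

lemma conv_cong_eq:
  assumes "\<forall>h\<in>Gp p. a h = a' h" "\<forall>h\<in>Gp p. b h = b' h" "0 < p"
  shows "conv p a b g = conv p a' b' g"
  unfolding conv_def using assms gdiv_in by (auto intro!: sum.cong)



definition lv :: "zpg \<Rightarrow> nat \<Rightarrow> grp \<Rightarrow> int" where "lv r k = (\<lambda>h. r h k)"
lemma lv_apply[simp]: "lv r k h = r h k" by (simp add: lv_def)

lemma zpg_mul_val: "g \<in> Gp p \<Longrightarrow> zpg_mul p r s g k = conv p (lv r k) (lv s k) g mod (int p ^ k)"
  by (simp add: zpg_mul_def zp_sum_def zp_mul_def conv_def mod_sum_eq)
lemma zpg_mul_out: "g \<notin> Gp p \<Longrightarrow> zpg_mul p r s g = zp_zero"
  by (simp add: zpg_mul_def)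
lemma zpg_add_val: "g \<in> Gp p \<Longrightarrow> zpg_add p r s g k = (r g k + s g k) mod (int p ^ k)"
  by (simp add: zpg_add_def zp_add_def)
lemma zpg_add_out: "g \<notin> Gp p \<Longrightarrow> zpg_add p r s g = zp_zero"
  by (simp add: zpg_add_def)

lemma Zp_bounds: "x \<in> Zp p \<Longrightarrow> 0 \<le> x k \<and> x k < int p ^ k" by (simp add: Zp_def)
lemma Zp_mod: "x \<in> Zp p \<Longrightarrow> x k mod (int p ^ k) = x k" by (simp add: Zp_def)
lemma Zp_Suc: "x \<in> Zp p \<Longrightarrow> x (Suc k) mod (int p ^ k) = x k" by (simp add: Zp_def)

lemma Zp_mod_le: assumes "x \<in> Zp p" "k \<le> j" shows "x j mod (int p ^ k) = x k"
  using assms(2)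
proof (induction j rule: dec_induct)
  case base then show ?case using Zp_mod[OF assms(1)] by simp
next
  case (step j)
  have "int p ^ k dvd int p ^ j" using step(1) by (simp add: le_imp_power_dvd)
  hence "x (Suc j) mod int p ^ k = x (Suc j) mod int p ^ j mod int p ^ k"
    by (simp add: mod_mod_cancel)
  also have "\<dots> = x j mod int p ^ k" using Zp_Suc[OF assms(1)] by simp
  finally show ?case using step by simp
qed

lemma zp_zero_in: "0 < p \<Longrightarrow> zp_zero \<in> Zp p" by (simp add: Zp_def zp_zero_def)

lemma zp_of_int_in: "0 < p \<Longrightarrow> zp_of_int p z \<in> Zp p"
proof -
  assume p: "0 < p"
  have "\<And>k. int p ^ k dvd int p ^ Suc k" by simp
  then show ?thesis using p
    by (simp add: Zp_def zp_of_int_def mod_mod_cancel)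
qed

lemma ZpG_mem: "r \<in> ZpG p \<longleftrightarrow> (\<forall>g\<in>Gp p. r g \<in> Zp p) \<and> (\<forall>g. g \<notin> Gp p \<longrightarrow> r g = zp_zero)"
  by (auto simp: ZpG_def)

lemma zpg_zero_in: "0 < p \<Longrightarrow> zpg_zero \<in> ZpG p"
  by (simp add: ZpG_mem zpg_zero_def zp_zero_in)

lemma mod_in_Zp:
  assumes p: "0 < p" and c: "\<And>k. X (Suc k) mod int p ^ k = X k mod int p ^ k"
  shows "(\<lambda>k. X k mod int p ^ k) \<in> Zp p"
proof -
  have "\<And>k. int p ^ k dvd int p ^ Suc k" by simp
  then show ?thesis using p c by (simp add: Zp_def mod_mod_cancel)
qed

lemma ZpG_mul: assumes p: "0 < p" and r: "r \<in> ZpG p" and s: "s \<in> ZpG p"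
  shows "zpg_mul p r s \<in> ZpG p"
proof -
  { fix g assume g: "g \<in> Gp p"
    have "zpg_mul p r s g = (\<lambda>k. conv p (lv r k) (lv s k) g mod int p ^ k)"
      using g by (auto simp: zpg_mul_val)
    also have "\<dots> \<in> Zp p"
    proof (rule mod_in_Zp[OF p])
      fix k
      show "conv p (lv r (Suc k)) (lv s (Suc k)) g mod int p ^ k = conv p (lv r k) (lv s k) g mod int p ^ k"
        apply (rule conv_cong_mod[OF p])
        using r s by (auto simp: ZpG_mem Zp_Suc Zp_mod)
    qed
    finally have "zpg_mul p r s g \<in> Zp p" . }
  then show ?thesis by (simp add: ZpG_mem zpg_mul_out)
qed

lemma ZpG_add: assumes p: "0 < p" and r: "r \<in> ZpG p" and s: "s \<in> ZpG p"
  shows "zpg_add p r s \<in> ZpG p"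
proof -
  { fix g assume g: "g \<in> Gp p"
    have "zpg_add p r s g = (\<lambda>k. (r g k + s g k) mod int p ^ k)"
      using g by (auto simp: zpg_add_val)
    also have "\<dots> \<in> Zp p"
    proof (rule mod_in_Zp[OF p])
      fix k
      have "r g (Suc k) mod int p ^ k = r g k mod int p ^ k" "s g (Suc k) mod int p ^ k = s g k mod int p ^ k"
        using r s g by (auto simp: ZpG_mem Zp_Suc Zp_mod)
      then show "(r g (Suc k) + s g (Suc k)) mod int p ^ k = (r g k + s g k) mod int p ^ k"
        by (metis mod_add_eq)
    qed
    finally have "zpg_add p r s g \<in> Zp p" . }
  then show ?thesis by (simp add: ZpG_mem zpg_add_out)
qed

lemma zpg_mul_eqI:
  assumes "\<And>g k. g \<in> Gp p \<Longrightarrow> conv p (lv r k) (lv s k) g mod int p ^ k = conv p (lv r' k) (lv s' k) g mod int p ^ k"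
  shows "zpg_mul p r s = zpg_mul p r' s'"
proof (rule ext)
  fix g show "zpg_mul p r s g = zpg_mul p r' s' g"
  proof (cases "g \<in> Gp p")
    case True
    show ?thesis
    proof (rule ext)
      fix k show "zpg_mul p r s g k = zpg_mul p r' s' g k"
        using assms[OF True, of k] True by (simp only: zpg_mul_val)
    qed
  next
    case False then show ?thesis by (simp add: zpg_mul_out)
  qed
qed

lemma zpg_mul_zeroI:
  assumes "\<And>g k. g \<in> Gp p \<Longrightarrow> conv p (lv r k) (lv s k) g mod int p ^ k = 0"
  shows "zpg_mul p r s = zpg_zero"
proof (rule ext)
  fix g show "zpg_mul p r s g = zpg_zero g"
  proof (cases "g \<in> Gp p")
    case True
    show ?thesis
    proof (rule ext)
      fix k show "zpg_mul p r s g k = zpg_zero g k"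
        using assms[OF True, of k] True by (simp add: zpg_mul_val zpg_zero_def zp_zero_def)
    qed
  next
    case False then show ?thesis by (simp add: zpg_mul_out zpg_zero_def)
  qed
qed

lemma zpg_mul_zero_right: "zpg_mul p r zpg_zero = zpg_zero"
  by (rule zpg_mul_zeroI) (simp add: conv_def zpg_zero_def zp_zero_def)

lemma lv_mul_mod: "0 < p \<Longrightarrow> \<forall>h\<in>Gp p. lv (zpg_mul p r s) k h mod int p ^ k = conv p (lv r k) (lv s k) h mod int p ^ k"
  by (simp add: zpg_mul_val)

lemma mul_assoc_mod: assumes p: "0 < p" and g: "g \<in> Gp p"
  shows "conv p (lv a k) (lv (zpg_mul p b c) k) g mod int p ^ k
       = conv p (conv p (lv a k) (lv b k)) (lv c k) g mod int p ^ k"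
proof -
  have "conv p (lv a k) (lv (zpg_mul p b c) k) g mod int p ^ k
      = conv p (lv a k) (conv p (lv b k) (lv c k)) g mod int p ^ k"
    by (rule conv_cong_mod[OF p]) (auto simp: zpg_mul_val)
  also have "\<dots> = conv p (conv p (lv a k) (lv b k)) (lv c k) g mod int p ^ k"
    using conv_assoc[OF p g] by simp
  finally show ?thesis .
qed

lemma w_in: "0 < p \<Longrightarrow> w p i \<in> ZpG p"
  by (auto simp: ZpG_mem w_def zp_one_def zp_of_int_in split: option.splits)

lemma Lam_sub: "0 < p \<Longrightarrow> y \<in> Lam p i \<Longrightarrow> y \<in> ZpG p"
  by (auto simp: Lam_def intro: ZpG_mul w_in)

lemma Lam_zero: assumes "0 < p" shows "zpg_zero \<in> Lam p i"
proof -
  have "zpg_mul p (w p i) zpg_zero = zpg_zero" by (rule zpg_mul_zero_right)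
  then show ?thesis unfolding Lam_def using zpg_zero_in[OF assms] by force
qed

lemma Lam_mul: assumes p: "0 < p" and a: "a \<in> ZpG p" and y: "y \<in> Lam p i"
  shows "zpg_mul p a y \<in> Lam p i"
proof -
  obtain r where r: "r \<in> ZpG p" and yr: "y = zpg_mul p (w p i) r" using y by (auto simp: Lam_def)
  have "zpg_mul p a (zpg_mul p (w p i) r) = zpg_mul p (w p i) (zpg_mul p a r)"
  proof (rule zpg_mul_eqI)
    fix g k assume g: "g \<in> Gp p"
    have "conv p (lv a k) (lv (zpg_mul p (w p i) r) k) g mod int p ^ k
         = conv p (conv p (lv a k) (lv (w p i) k)) (lv r k) g mod int p ^ k"
      by (rule mul_assoc_mod[OF p g])
    also have "\<dots> = conv p (conv p (lv (w p i) k) (lv a k)) (lv r k) g mod int p ^ k"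
    proof -
      have "conv p (conv p (lv a k) (lv (w p i) k)) (lv r k) g = conv p (conv p (lv (w p i) k) (lv a k)) (lv r k) g"
        by (rule conv_cong_eq) (use conv_comm[OF p] p in auto)
      then show ?thesis by simp
    qed
    also have "\<dots> = conv p (lv (w p i) k) (lv (zpg_mul p a r) k) g mod int p ^ k"
      by (rule mul_assoc_mod[OF p g, symmetric])
    finally show "conv p (lv a k) (lv (zpg_mul p (w p i) r) k) g mod int p ^ k
         = conv p (lv (w p i) k) (lv (zpg_mul p a r) k) g mod int p ^ k" .
  qed
  then show ?thesis using yr ZpG_mul[OF p a r] by (auto simp: Lam_def)
qed

lemma Lam_add: assumes p: "0 < p" and y: "y \<in> Lam p i" and z: "z \<in> Lam p i"
  shows "zpg_add p y z \<in> Lam p i"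
proof -
  obtain r where r: "r \<in> ZpG p" and yr: "y = zpg_mul p (w p i) r" using y by (auto simp: Lam_def)
  obtain s where s: "s \<in> ZpG p" and zs: "z = zpg_mul p (w p i) s" using z by (auto simp: Lam_def)
  have "zpg_add p y z = zpg_mul p (w p i) (zpg_add p r s)"
  proof (rule ext)
    fix g show "zpg_add p y z g = zpg_mul p (w p i) (zpg_add p r s) g"
    proof (cases "g \<in> Gp p")
      case False then show ?thesis by (simp add: zpg_add_out zpg_mul_out)
    next
      case g: True
      show ?thesis
      proof (rule ext)
        fix k
        have "zpg_add p y z g k = (conv p (lv (w p i) k) (lv r k) g + conv p (lv (w p i) k) (lv s k) g) mod int p ^ k"
          using g by (simp add: zpg_add_val yr zs zpg_mul_val mod_add_eq)
        also have "\<dots> = conv p (lv (w p i) k) (\<lambda>h. lv r k h + lv s k h) g mod int p ^ k"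
          by (simp add: conv_def sum.distrib distrib_left)
        also have "\<dots> = conv p (lv (w p i) k) (lv (zpg_add p r s) k) g mod int p ^ k"
          by (rule conv_cong_mod[OF p]) (auto simp: zpg_add_val)
        also have "\<dots> = zpg_mul p (w p i) (zpg_add p r s) g k" using g by (simp add: zpg_mul_val)
        finally show "zpg_add p y z g k = zpg_mul p (w p i) (zpg_add p r s) g k" .
      qed
    qed
  qed
  then show ?thesis using ZpG_add[OF p r s] by (auto simp: Lam_def)
qed



lemma Nsub_mem: "g \<in> Nsub p \<longleftrightarrow> fst g < p \<and> snd g = 0"
  by (cases g) (auto simp: Nsub_def)
lemma Nsub_sub: "Nsub p \<subseteq> Gp p" by (auto simp: Nsub_mem Gp_mem)

lemma IN_ZpG: "a \<in> IN p \<Longrightarrow> a \<in> ZpG p" by (simp add: IN_def)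

lemma IN_kill:
  assumes p: "0 < p" and a: "a \<in> IN p"
    and inv: "\<forall>h\<in>Gp p. \<forall>h'\<in>Nsub p. W (gdiv p h h') = W h"
  shows "zpg_mul p a (zpg_mul p W r) = zpg_zero"
proof (rule zpg_mul_zeroI)
  fix g k assume g: "g \<in> Gp p"
  have out: "\<And>h'. h' \<notin> Nsub p \<Longrightarrow> a h' = zp_zero" using a unfolding IN_def by blast
  have s0: "(\<Sum>h'\<in>Nsub p. a h' k) mod int p ^ k = 0"
  proof -
    have "zp_sum p a (Nsub p) k = zp_zero k" using a by (simp add: IN_def)
    thus ?thesis by (simp add: zp_sum_def zp_zero_def)
  qed
  have cw: "conv p (lv a k) (lv W k) h mod int p ^ k = 0 mod int p ^ k" if h: "h \<in> Gp p" for h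
  proof -
    have "conv p (lv a k) (lv W k) h = (\<Sum>h'\<in>Nsub p. a h' k * W (gdiv p h h') k)"
      unfolding conv_def lv_apply
      apply (rule sum.mono_neutral_right)
      using Nsub_sub out by (auto simp: finite_Gp zp_zero_def)
    also have "\<dots> = (\<Sum>h'\<in>Nsub p. a h' k * W h k)"
      using inv h by (auto intro!: sum.cong)
    also have "\<dots> = W h k * (\<Sum>h'\<in>Nsub p. a h' k)"
      by (simp add: sum_distrib_left mult.commute)
    finally show ?thesis using s0 by (metis mod_mult_right_eq mult_zero_right)
  qed
  have "conv p (lv a k) (lv (zpg_mul p W r) k) g mod int p ^ k
      = conv p (conv p (lv a k) (lv W k)) (lv r k) g mod int p ^ k"
    by (rule mul_assoc_mod[OF p g])
  also have "\<dots> = conv p (\<lambda>_. 0) (lv r k) g mod int p ^ k"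
    by (rule conv_cong_mod[OF p]) (auto simp: cw)
  also have "\<dots> = 0" by (simp add: conv_def)
  finally show "conv p (lv a k) (lv (zpg_mul p W r) k) g mod int p ^ k = 0" .
qed

lemma w_None_inv: "0 < p \<Longrightarrow> \<forall>h\<in>Gp p. \<forall>h'\<in>Nsub p. w p None (gdiv p h h') = w p None h"
  by (auto simp: w_def gdiv_in)

lemma w_N_inv: "0 < p \<Longrightarrow> \<forall>h\<in>Gp p. \<forall>h'\<in>Nsub p. w p (Some (Nsub p)) (gdiv p h h') = w p (Some (Nsub p)) h"
proof (intro ballI)
  fix h h' assume p: "0 < p" and h: "h \<in> Gp p" and h': "h' \<in> Nsub p"
  have "gdiv p h h' \<in> Nsub p \<longleftrightarrow> h \<in> Nsub p"
    using h h' by (cases h, cases h') (auto simp: Nsub_mem Gp_mem gdiv_def)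
  then show "w p (Some (Nsub p)) (gdiv p h h') = w p (Some (Nsub p)) h"
    using h p by (simp add: w_def gdiv_in)
qed

lemma IN_kill_Lam:
  assumes p: "0 < p" and a: "a \<in> IN p" and i: "i = None \<or> i = Some (Nsub p)" and y: "y \<in> Lam p i"
  shows "zpg_mul p a y = zpg_zero"
proof -
  obtain r where yr: "y = zpg_mul p (w p i) r" using y by (auto simp: Lam_def)
  show ?thesis unfolding yr
    apply (rule IN_kill[OF p a])
    using i w_None_inv[OF p] w_N_inv[OF p] by auto
qed



section \<open>Subgroups of order p\<close>

lemma sub_pow:
  assumes p: "0 < p" and H: "H \<in> subgroups_p p" and x: "x \<in> H" and j: "1 \<le> j"
  shows "((j * fst x) mod p, (j * snd x) mod p) \<in> H"
  using j
proof (induction j rule: dec_induct)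
  case base
  have "x \<in> Gp p" using H x by (auto simp: subgroups_p_def)
  then show ?case using x by (cases x) (simp add: Gp_mem)
next
  case (step j)
  have "gmul p ((j * fst x) mod p, (j * snd x) mod p) x \<in> H"
    using H step.IH x by (auto simp: subgroups_p_def)
  moreover have "gmul p ((j * fst x) mod p, (j * snd x) mod p) x = ((Suc j * fst x) mod p, (Suc j * snd x) mod p)"
    by (simp add: gmul_def mod_add_right_eq add.commute)
  ultimately show ?case by simp
qed

lemma card_Nsub: "card (Nsub p) = p"
  by (simp add: Nsub_def card_cartesian_product)

lemma sub_N_trivial:
  assumes p: "prime p" and H: "H \<in> subgroups_p p" and HN: "H \<noteq> Nsub p"
    and x: "(a, 0) \<in> H"
  shows "a = 0"
proof (rule ccontr)
  assume a0: "a \<noteq> 0"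
  have p0: "0 < p" using p prime_gt_0_nat by blast
  have HG: "H \<subseteq> Gp p" using H by (simp add: subgroups_p_def)
  have ap: "a < p" using HG x by (auto simp: Gp_mem)
  have "\<not> p dvd a" using a0 ap by (auto dest: dvd_imp_le)
  hence "coprime p a" by (rule prime_imp_coprime[OF p])
  hence cop: "coprime a p" by (simp add: coprime_commute)
  obtain u where u: "[a * u = Suc 0] (mod p)" using cong_solve_coprime_nat[OF cop] by blast
  have "Nsub p \<subseteq> H"
  proof
    fix g assume g: "g \<in> Nsub p"
    then obtain b where gb: "g = (b, 0)" and bp: "b < p" by (cases g) (auto simp: Nsub_mem)
    have "(((u * b + p) * fst (a,0::nat)) mod p, ((u * b + p) * snd (a,0::nat)) mod p) \<in> H"
      by (rule sub_pow[OF p0 H x]) (use p0 in auto)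
    moreover have "((u * b + p) * a) mod p = b"
    proof -
      have "((u * b + p) * a) mod p = ((a * u) * b) mod p"
        by (simp add: algebra_simps)
      also have "\<dots> = ((a * u) mod p * b) mod p" by (simp add: mod_mult_left_eq)
      also have "\<dots> = b" using u bp p0 by (simp add: cong_def)
      finally show ?thesis .
    qed
    ultimately show "g \<in> H" using gb by simp
  qed
  moreover have "finite H" using HG finite_Gp finite_subset by blast
  moreover have "card H = p" using H by (simp add: subgroups_p_def)
  ultimately have "Nsub p = H" using card_Nsub by (metis card_subset_eq)
  thus False using HN by simp
qed

lemma mod_aux: "0 < (p::nat) \<Longrightarrow> x1 < p \<Longrightarrow> y1 < p \<Longrightarrow> (x1 + ((p - 1) * y1) mod p) mod p = 0 \<Longrightarrow> x1 = y1"
proof -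
  assume h: "0 < p" "x1 < p" "y1 < p" "(x1 + ((p - 1) * y1) mod p) mod p = 0"
  have "(x1 + (p - 1) * y1) mod p = 0" using h(4) by (simp add: mod_add_right_eq)
  hence "(x1 + (p - 1) * y1 + y1) mod p = y1 mod p" by (metis add.left_neutral mod_add_left_eq)
  moreover have "x1 + (p - 1) * y1 + y1 = x1 + p * y1"
  proof -
    have "(p - 1) * y1 + y1 = p * y1" using h(1) by (cases p) auto
    thus ?thesis by (simp add: add.assoc)
  qed
  ultimately have "(x1 + p * y1) mod p = y1 mod p" by metis
  hence "x1 mod p = y1 mod p" by simp
  thus ?thesis using h by simp
qed

lemma sub_snd_inj:
  assumes p: "prime p" and H: "H \<in> subgroups_p p" and HN: "H \<noteq> Nsub p"
    and x: "x \<in> H" and y: "y \<in> H" and s: "snd x = snd y"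
  shows "x = y"
proof (rule ccontr)
  assume ne: "x \<noteq> y"
  have p0: "0 < p" using p prime_gt_0_nat by blast
  have p2: "2 \<le> p" using p prime_ge_2_nat by blast
  have HG: "H \<subseteq> Gp p" using H by (simp add: subgroups_p_def)
  have xg: "fst x < p" "snd x < p" "fst y < p" "snd y < p" using HG x y by (auto simp: Gp_mem)
  have fne: "fst x \<noteq> fst y" using ne s by (cases x, cases y) auto
  have yi: "(((p - 1) * fst y) mod p, ((p - 1) * snd y) mod p) \<in> H"
    by (rule sub_pow[OF p0 H y]) (use p2 in auto)
  have z: "gmul p x (((p - 1) * fst y) mod p, ((p - 1) * snd y) mod p) \<in> H"
    using H x yi by (auto simp: subgroups_p_def)
  have "snd x + (p - 1) * snd y = p * snd x"
  proof -
    have "(p - 1) * snd x + snd x = p * snd x" using p0 by (cases p) auto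
    thus ?thesis using s by simp
  qed
  hence sz: "(snd x + ((p - 1) * snd y) mod p) mod p = 0" by (simp add: mod_add_right_eq)
  have "(fst x + ((p - 1) * fst y) mod p) mod p = 0"
    apply (rule sub_N_trivial[OF p H HN])
    using z sz by (simp add: gmul_def)
  hence "fst x = fst y" using mod_aux[OF p0 xg(1) xg(3)] by simp
  thus False using fne by simp
qed

lemma sub_snd_exists:
  assumes p: "prime p" and H: "H \<in> subgroups_p p" and HN: "H \<noteq> Nsub p" and c: "c < p"
  shows "\<exists>x\<in>H. snd x = c"
proof -
  have HG: "H \<subseteq> Gp p" using H by (simp add: subgroups_p_def)
  have inj: "inj_on snd H" using sub_snd_inj[OF p H HN] by (auto simp: inj_on_def)
  have "snd ` H \<subseteq> {..<p}" using HG by (auto simp: Gp_mem)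
  moreover have "card (snd ` H) = p" using inj H by (simp add: card_image subgroups_p_def)
  ultimately have "snd ` H = {..<p}" by (simp add: card_subset_eq)
  thus ?thesis using c by (metis imageE lessThan_iff)
qed

lemma count_one:
  assumes p: "prime p" and H: "H \<in> subgroups_p p" and HN: "H \<noteq> Nsub p" and h: "h \<in> Gp p"
  shows "card {h' \<in> Nsub p. gdiv p h h' \<in> H} = 1"
proof -
  have p0: "0 < p" using p prime_gt_0_nat by blast
  have HG: "H \<subseteq> Gp p" using H by (simp add: subgroups_p_def)
  have hp: "fst h < p" "snd h < p" using h by (auto simp: Gp_mem)
  obtain x where x: "x \<in> H" "snd x = snd h" using sub_snd_exists[OF p H HN hp(2)] by blast
  have xp: "fst x < p" using x HG by (auto simp: Gp_mem)
  define j0 where "j0 = (fst h + p - fst x) mod p"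
  have "{h' \<in> Nsub p. gdiv p h h' \<in> H} = {(j0, 0)}"
  proof (intro equalityI subsetI)
    fix h' assume "h' \<in> {h' \<in> Nsub p. gdiv p h h' \<in> H}"
    then obtain j where hj: "h' = (j, 0)" "j < p" and inH: "gdiv p h h' \<in> H"
      by (cases h') (auto simp: Nsub_mem)
    have gd: "gdiv p h h' = ((fst h + p - j) mod p, snd h)" using hj hp by (simp add: gdiv_def)
    have "gdiv p h h' = x"
      by (rule sub_snd_inj[OF p H HN inH x(1)]) (simp add: gd x)
    hence "(fst h + p - j) mod p = fst x" using gd by (metis fst_conv)
    hence "j0 = j" unfolding j0_def using K1[OF p0 hp(1) hj(2)] by simp
    thus "h' \<in> {(j0, 0)}" using hj by simp
  next
    fix h' :: grp assume "h' \<in> {(j0, 0)}"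
    hence h': "h' = (j0, 0)" by simp
    have j0p: "j0 < p" using p0 by (simp add: j0_def)
    have "gdiv p h h' = ((fst h + p - j0) mod p, snd h)" using h' hp by (simp add: gdiv_def)
    also have "\<dots> = x" using K1[OF p0 hp(1) xp] x(2) by (cases x) (simp add: j0_def)
    finally show "h' \<in> {h' \<in> Nsub p. gdiv p h h' \<in> H}" using x h' j0p by (simp add: Nsub_mem)
  qed
  thus ?thesis by simp
qed



lemma sum_mod_cong: "(\<And>x. x \<in> A \<Longrightarrow> f x mod m = g x mod m) \<Longrightarrow> (\<Sum>x\<in>A. f x) mod m = (\<Sum>x\<in>A. g x :: int) mod m"
  by (metis (mono_tags, lifting) mod_sum_eq sum.cong)

definition a0 :: "nat \<Rightarrow> zpg" where
  "a0 p = (\<lambda>g. if g \<in> Gp p then (if g = (0,0) then zp_of_int p (int p - 1)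
       else if g \<in> Nsub p then zp_of_int p (-1) else zp_zero) else zp_zero)"

lemma zero_in_N: "0 < p \<Longrightarrow> (0,0) \<in> Nsub p" by (simp add: Nsub_mem)
lemma zero_in_G: "0 < p \<Longrightarrow> (0,0) \<in> Gp p" by (simp add: Gp_mem)

lemma a0_mod: "0 < p \<Longrightarrow> g \<in> Nsub p \<Longrightarrow> a0 p g k mod int p ^ k = ((if g = (0,0) then int p else 0) - 1) mod int p ^ k"
  using Nsub_sub by (auto simp: a0_def zp_of_int_def)

lemma a0_out: "0 < p \<Longrightarrow> g \<notin> Nsub p \<Longrightarrow> a0 p g = zp_zero"
  using Nsub_sub zero_in_N[of p] by (auto simp: a0_def)

lemma finite_Nsub: "finite (Nsub p)" by (simp add: Nsub_def)

lemma a0_IN: assumes p: "0 < p" shows "a0 p \<in> IN p"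
proof -
  have "a0 p \<in> ZpG p" using p by (auto simp: ZpG_mem a0_def zp_of_int_in zp_zero_in)
  moreover have "zp_sum p (a0 p) (Nsub p) = zp_zero"
  proof (rule ext)
    fix k
    have "(\<Sum>g\<in>Nsub p. a0 p g k) mod int p ^ k = (\<Sum>g\<in>Nsub p. (if g = (0,0) then int p else 0) - 1) mod int p ^ k"
      by (rule sum_mod_cong) (simp add: a0_mod p)
    also have "(\<Sum>g\<in>Nsub p. (if g = (0,0) then int p else 0) - 1) = 0"
      using p by (simp add: sum_subtractf finite_Nsub zero_in_N card_Nsub)
    finally show "zp_sum p (a0 p) (Nsub p) k = zp_zero k" by (simp add: zp_sum_def zp_zero_def)
  qed
  ultimately show ?thesis by (simp add: IN_def a0_out[OF p])
qed

definition cp :: "nat \<Rightarrow> zpg" where "cp p = zpg_const (zp_of_int p (int p))"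

lemma conv_const: assumes p: "0 < p" and g: "g \<in> Gp p"
  shows "conv p (lv (zpg_const c) k) b g = c k * b g"
proof -
  have "conv p (lv (zpg_const c) k) b g = (\<Sum>h\<in>Gp p. if h = (0,0) then c k * b (gdiv p g h) else 0)"
    unfolding conv_def by (rule sum.cong) (auto simp: zpg_const_def zp_zero_def)
  also have "\<dots> = c k * b g" using p g by (simp add: zero_in_G gdiv_zero finite_Gp)
  finally show ?thesis .
qed

lemma wH_sum:
  assumes p: "prime p" and H: "H \<in> subgroups_p p" and HN: "H \<noteq> Nsub p" and h: "h \<in> Gp p"
  shows "(\<Sum>h'\<in>Nsub p. w p (Some H) (gdiv p h h') k) mod int p ^ k = 0"
proof -
  have p0: "0 < p" using p prime_gt_0_nat by blast
  have "(\<Sum>h'\<in>Nsub p. w p (Some H) (gdiv p h h') k) mod int p ^ k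
      = (\<Sum>h'\<in>Nsub p. (if gdiv p h h' \<in> H then int p else 0) - 1) mod int p ^ k"
    by (rule sum_mod_cong) (auto simp: w_def gdiv_in[OF p0] zp_of_int_def)
  also have "(\<Sum>h'\<in>Nsub p. (if gdiv p h h' \<in> H then int p else 0) - 1)
      = int p * int (card {h' \<in> Nsub p. gdiv p h h' \<in> H}) - int p"
    by (simp add: sum_subtractf finite_Nsub card_Nsub sum.inter_filter[symmetric])
  also have "\<dots> = 0" using count_one[OF p H HN h] by simp
  finally show ?thesis by simp
qed

lemma a0_vs_cp:
  assumes p: "prime p" and H: "H \<in> subgroups_p p" and HN: "H \<noteq> Nsub p" and y: "y \<in> Lam p (Some H)"
  shows "zpg_mul p (a0 p) y = zpg_mul p (cp p) y"
proof -
  have p0: "0 < p" using p prime_gt_0_nat by blast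
  obtain r where yr: "y = zpg_mul p (w p (Some H)) r" using y by (auto simp: Lam_def)
  let ?W = "w p (Some H)"
  have key: "conv p (lv (a0 p) k) (lv ?W k) h mod int p ^ k = conv p (lv (cp p) k) (lv ?W k) h mod int p ^ k"
    if h: "h \<in> Gp p" for h k
  proof -
    have S: "conv p (lv (a0 p) k) (lv ?W k) h = (\<Sum>h'\<in>Nsub p. a0 p h' k * ?W (gdiv p h h') k)"
      unfolding conv_def lv_apply
      apply (rule sum.mono_neutral_right)
      using Nsub_sub by (auto simp: finite_Gp a0_out[OF p0] zp_zero_def)
    have T: "(\<Sum>h'\<in>Nsub p. a0 p h' k * ?W (gdiv p h h') k) mod int p ^ k
       = (\<Sum>h'\<in>Nsub p. ((if h' = (0,0) then int p else 0) - 1) * ?W (gdiv p h h') k) mod int p ^ k"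
    proof (rule sum_mod_cong)
      fix h' assume "h' \<in> Nsub p"
      hence "a0 p h' k mod int p ^ k = ((if h' = (0,0) then int p else 0) - 1) mod int p ^ k"
        by (rule a0_mod[OF p0])
      thus "a0 p h' k * ?W (gdiv p h h') k mod int p ^ k
          = ((if h' = (0,0) then int p else 0) - 1) * ?W (gdiv p h h') k mod int p ^ k"
        by (metis mod_mult_left_eq)
    qed
    have U: "(\<Sum>h'\<in>Nsub p. ((if h' = (0,0) then int p else 0) - 1) * ?W (gdiv p h h') k)
       = (\<Sum>h'\<in>Nsub p. (if h' = (0,0) then int p * ?W (gdiv p h h') k else 0)) - (\<Sum>h'\<in>Nsub p. ?W (gdiv p h h') k)"
    proof -
      have "(\<Sum>h'\<in>Nsub p. ((if h' = (0,0) then int p else 0) - 1) * ?W (gdiv p h h') k)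
         = (\<Sum>h'\<in>Nsub p. (if h' = (0,0) then int p * ?W (gdiv p h h') k else 0) - ?W (gdiv p h h') k)"
        by (rule sum.cong) (auto simp: algebra_simps)
      thus ?thesis by (simp only: sum_subtractf)
    qed
    have "conv p (lv (a0 p) k) (lv ?W k) h mod int p ^ k
       = ((\<Sum>h'\<in>Nsub p. (if h' = (0,0) then int p * ?W (gdiv p h h') k else 0)) - (\<Sum>h'\<in>Nsub p. ?W (gdiv p h h') k)) mod int p ^ k"
      using S T U by simp
    also have "\<dots> = (int p * ?W h k - (\<Sum>h'\<in>Nsub p. ?W (gdiv p h h') k)) mod int p ^ k"
      using p0 h by (simp add: finite_Nsub zero_in_N gdiv_zero)
    also have "\<dots> = (int p * ?W h k - (\<Sum>h'\<in>Nsub p. ?W (gdiv p h h') k) mod int p ^ k) mod int p ^ k"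
      by (simp add: mod_diff_right_eq)
    finally have A: "conv p (lv (a0 p) k) (lv ?W k) h mod int p ^ k = (int p * ?W h k) mod int p ^ k"
      using wH_sum[OF p H HN h, of k] by simp
    have "conv p (lv (cp p) k) (lv ?W k) h = (int p mod int p ^ k) * ?W h k"
      unfolding cp_def using conv_const[OF p0 h] by (simp add: zp_of_int_def)
    hence B: "conv p (lv (cp p) k) (lv ?W k) h mod int p ^ k = (int p * ?W h k) mod int p ^ k"
      by (simp add: mod_mult_left_eq)
    show ?thesis using A B by simp
  qed
  show ?thesis unfolding yr
  proof (rule zpg_mul_eqI)
    fix g k assume g: "g \<in> Gp p"
    have "conv p (lv (a0 p) k) (lv (zpg_mul p ?W r) k) g mod int p ^ k
        = conv p (conv p (lv (a0 p) k) (lv ?W k)) (lv r k) g mod int p ^ k"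
      by (rule mul_assoc_mod[OF p0 g])
    also have "\<dots> = conv p (conv p (lv (cp p) k) (lv ?W k)) (lv r k) g mod int p ^ k"
      by (rule conv_cong_mod[OF p0]) (auto simp: key)
    also have "\<dots> = conv p (lv (cp p) k) (lv (zpg_mul p ?W r) k) g mod int p ^ k"
      by (rule mul_assoc_mod[OF p0 g, symmetric])
    finally show "conv p (lv (a0 p) k) (lv (zpg_mul p ?W r) k) g mod int p ^ k
        = conv p (lv (cp p) k) (lv (zpg_mul p ?W r) k) g mod int p ^ k" .
  qed
qed

section \<open>Domain property\<close>

lemma pp_dvd:
  fixes x y :: int
  assumes p: "prime p" shows "p ^ (m + k) dvd x * y \<Longrightarrow> \<not> p ^ m dvd x \<Longrightarrow> p ^ k dvd y"
proof (induction m arbitrary: x)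
  case 0 then show ?case by simp
next
  case (Suc m)
  show ?case
  proof (cases "p dvd x")
    case True
    then obtain x' where x': "x = p * x'" by (auto elim: dvdE)
    have pnz: "p \<noteq> 0" using p by auto
    have "p * p ^ (m + k) dvd p * (x' * y)" using Suc.prems(1) x' by (simp add: mult.assoc)
    hence "p ^ (m + k) dvd x' * y" using pnz by simp
    moreover have "\<not> p ^ m dvd x'" using Suc.prems(2) x' by simp
    ultimately show ?thesis by (rule Suc.IH)
  next
    case False
    hence "coprime (p ^ (Suc m + k)) x" using p by (simp add: prime_imp_coprime)
    hence "p ^ (Suc m + k) dvd y" using Suc.prems(1) by (simp add: coprime_dvd_mult_right_iff)
    thus ?thesis by (metis add.commute dvd_trans le_add2 le_imp_power_dvd)
  qed
qed

lemma Zp_domain: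
  assumes p: "prime p" and a: "a \<in> Zp p" and b: "b \<in> Zp p" and anz: "a \<noteq> zp_zero"
    and ab: "\<And>j. (a j * b j) mod int p ^ j = 0"
  shows "b = zp_zero"
proof (rule ext)
  fix k
  have p0: "0 < p" using p prime_gt_0_nat by blast
  have pi: "prime (int p)" using p by simp
  obtain m where m: "a m \<noteq> 0" using anz by (auto simp: zp_zero_def)
  have "a (m + k) mod int p ^ m = a m" using Zp_mod_le[OF a] by simp
  hence nd: "\<not> int p ^ m dvd a (m + k)" using m by auto
  have "int p ^ (m + k) dvd a (m + k) * b (m + k)" using ab[of "m+k"] by (simp add: dvd_eq_mod_eq_0)
  hence "int p ^ k dvd b (m + k)" using pp_dvd[OF pi] nd by blast
  hence "b (m + k) mod int p ^ k = 0" by simp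
  moreover have "b (m + k) mod int p ^ k = b k" using Zp_mod_le[OF b] by simp
  ultimately show "b k = zp_zero k" by (simp add: zp_zero_def)
qed

lemma const_cancel:
  assumes p: "prime p" and a: "a \<in> Zp p" and anz: "a \<noteq> zp_zero" and y: "y \<in> ZpG p"
    and m: "zpg_mul p (zpg_const a) y = zpg_zero"
  shows "y = zpg_zero"
proof (rule ext)
  fix g
  have p0: "0 < p" using p prime_gt_0_nat by blast
  show "y g = zpg_zero g"
  proof (cases "g \<in> Gp p")
    case False then show ?thesis using y unfolding ZpG_mem zpg_zero_def by blast
  next
    case g: True
    have yg: "y g \<in> Zp p" using y g by (simp add: ZpG_mem)
    have "y g = zp_zero"
    proof (rule Zp_domain[OF p a yg anz])
      fix j
      have "zpg_mul p (zpg_const a) y g j = 0" using m by (simp add: zpg_zero_def zp_zero_def)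
      thus "(a j * y g j) mod int p ^ j = 0" using g conv_const[OF p0 g] by (simp add: zpg_mul_val lv_def)
    qed
    thus ?thesis by (simp add: zpg_zero_def)
  qed
qed

lemma cp_const_in: "0 < p \<Longrightarrow> zp_of_int p (int p) \<in> Zp p" by (rule zp_of_int_in)
lemma cp_const_nz: "1 < p \<Longrightarrow> zp_of_int p (int p) \<noteq> zp_zero"
proof
  assume p: "1 < p" and e: "zp_of_int p (int p) = zp_zero"
  have "int p mod int p ^ 2 = 0" using fun_cong[OF e, of 2] by (simp add: zp_of_int_def zp_zero_def)
  moreover have "int p < int p ^ 2" using p by (simp add: power2_eq_square)
  ultimately show False using p by simp
qed



lemma iter_props:
  assumes "\<forall>x\<in>V. F x \<in> V" and "\<forall>x\<in>V. \<forall>y\<in>V. F (x + y) = F x + F y"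
  shows "(\<forall>x\<in>V. (F ^^ n) x \<in> V) \<and> (\<forall>x\<in>V. \<forall>y\<in>V. (F ^^ n) (x + y) = (F ^^ n) x + (F ^^ n) y)"
proof (induction n)
  case 0 then show ?case by simp
next
  case (Suc n) then show ?case using assms by auto
qed

context
  fixes p :: nat and V :: "'v::ab_group_add set" and vn vc :: "'v \<Rightarrow> 'v"
  assumes M: "FpG_module p V vn vc"
begin

lemma M_zero: "0 \<in> V" using M by (simp add: FpG_module_def)
lemma M_add: "x \<in> V \<Longrightarrow> y \<in> V \<Longrightarrow> x + y \<in> V" using M by (simp add: FpG_module_def)

lemma gact_props: "(\<forall>x\<in>V. gact vn vc g x \<in> V) \<and> (\<forall>x\<in>V. \<forall>y\<in>V. gact vn vc g (x + y) = gact vn vc g x + gact vn vc g y)"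
proof -
  have n: "\<forall>x\<in>V. vn x \<in> V" "\<forall>x\<in>V. \<forall>y\<in>V. vn (x + y) = vn x + vn y"
    and c: "\<forall>x\<in>V. vc x \<in> V" "\<forall>x\<in>V. \<forall>y\<in>V. vc (x + y) = vc x + vc y"
    using M by (auto simp: FpG_module_def)
  note N = iter_props[OF n, of "fst g"] and C = iter_props[OF c, of "snd g"]
  show ?thesis unfolding gact_def using N C by auto
qed

lemma gact_zero: "gact vn vc g 0 = 0"
proof -
  have "gact vn vc g (0 + 0) = gact vn vc g 0 + gact vn vc g 0"
    using gact_props M_zero by blast
  thus ?thesis by simp
qed

lemma nsm_add: "nsm m (x + y) = nsm m x + nsm m (y::'v)"
  by (simp add: nsm_def sum.distrib)

lemma vact_add: "x \<in> V \<Longrightarrow> y \<in> V \<Longrightarrow> vact p vn vc r (x + y) = vact p vn vc r x + vact p vn vc r y"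
  unfolding vact_def using gact_props by (simp add: nsm_add sum.distrib)

lemma vact_zero: "vact p vn vc r 0 = 0"
  by (simp add: vact_def gact_zero nsm_def)

lemma vact_sum:
  assumes "finite A" shows "(\<forall>i\<in>A. v i \<in> V) \<Longrightarrow> vact p vn vc r (\<Sum>i\<in>A. v i) = (\<Sum>i\<in>A. vact p vn vc r (v i)) \<and> (\<Sum>i\<in>A. v i) \<in> V"
  using assms
proof (induction A rule: finite_induct)
  case empty then show ?case by (simp add: vact_zero M_zero)
next
  case (insert a A)
  then show ?case by (simp add: vact_add M_add)
qed

end

lemma finite_Ip: "finite (Ip p)"
proof -
  have "subgroups_p p \<subseteq> Pow (Gp p)" by (auto simp: subgroups_p_def)
  hence "finite (subgroups_p p)" using finite_Gp by (metis finite_Pow_iff rev_finite_subset)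
  thus ?thesis by (simp add: Ip_def)
qed

lemma Nsub_subgroup: "0 < p \<Longrightarrow> Nsub p \<in> subgroups_p p"
  using Nsub_sub card_Nsub zero_in_N
  by (auto simp: subgroups_p_def Nsub_mem gmul_def)

lemma None_Ip: "None \<in> Ip p" by (simp add: Ip_def)
lemma N_Ip: "0 < p \<Longrightarrow> Some (Nsub p) \<in> Ip p" by (simp add: Ip_def Nsub_subgroup)

lemma zpg_add_zero: "zpg_add p zpg_zero zpg_zero = zpg_zero"
  by (auto simp: zpg_add_def zpg_zero_def zp_add_def zp_zero_def)

lemma fc_add_zero: "fc_add p fc_zero fc_zero = fc_zero"
  by (simp add: fc_add_def fc_zero_def zpg_add_zero)

lemma fc_smul_zero: "fc_smul p a fc_zero = fc_zero"
  by (simp add: fc_smul_def fc_zero_def zpg_mul_zero_right)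

lemma fc_zero_in: "0 < p \<Longrightarrow> fc_zero \<in> Fcomp p n i"
  by (simp add: Fcomp_def fc_zero_def Lam_zero)

lemma Fcomp_add: "0 < p \<Longrightarrow> x \<in> Fcomp p n i \<Longrightarrow> y \<in> Fcomp p n i \<Longrightarrow> fc_add p x y \<in> Fcomp p n i"
  by (simp add: Fcomp_def fc_add_def Lam_add zpg_add_zero)

lemma Fcomp_smul: "0 < p \<Longrightarrow> a \<in> ZpG p \<Longrightarrow> x \<in> Fcomp p n i \<Longrightarrow> fc_smul p a x \<in> Fcomp p n i"
  by (simp add: Fcomp_def fc_smul_def Lam_mul zpg_mul_zero_right)

lemma Fset_mem: "x \<in> Fset p d \<longleftrightarrow> (\<forall>i\<in>Ip p. x i \<in> Fcomp p (d i) i) \<and> (\<forall>i. i \<notin> Ip p \<longrightarrow> x i = fc_zero)"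
  by (auto simp: Fset_def)

lemma Fcomp_ZpG: "0 < p \<Longrightarrow> x \<in> Fcomp p n i \<Longrightarrow> x k \<in> ZpG p"
  by (cases "k < n") (auto simp: Fcomp_def Lam_sub zpg_zero_in)



locale ctx =
  fixes p :: nat and d :: "ix \<Rightarrow> nat"
    and V :: "'v::ab_group_add set" and vn vc :: "'v \<Rightarrow> 'v"
    and Vi :: "ix \<Rightarrow> 'v set" and f :: "ix \<Rightarrow> fcomp \<Rightarrow> 'v"
  assumes prime: "prime p"
    and D: "diagram p V vn vc Vi"
    and GC: "\<forall>i\<in>Ip p. good_cover p (d i) i vn vc (Vi i) (f i)"
begin

lemma p0: "0 < p" using prime prime_gt_0_nat by blast
lemma p1: "1 < p" using prime prime_gt_1_nat by blast
lemma Mod: "FpG_module p V vn vc" using D by (simp add: diagram_def)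

lemma f_in: "i \<in> Ip p \<Longrightarrow> x \<in> Fcomp p (d i) i \<Longrightarrow> f i x \<in> V"
proof -
  assume i: "i \<in> Ip p" and x: "x \<in> Fcomp p (d i) i"
  have "f i ` Fcomp p (d i) i = Vi i" using GC i by (simp add: good_cover_def)
  moreover have "Vi i \<subseteq> V" using D i by (simp add: diagram_def)
  ultimately show ?thesis using x by blast
qed
lemma f_add: "i \<in> Ip p \<Longrightarrow> x \<in> Fcomp p (d i) i \<Longrightarrow> y \<in> Fcomp p (d i) i \<Longrightarrow> f i (fc_add p x y) = f i x + f i y"
  using GC by (auto simp: good_cover_def)
lemma f_smul: "i \<in> Ip p \<Longrightarrow> r \<in> ZpG p \<Longrightarrow> x \<in> Fcomp p (d i) i \<Longrightarrow> f i (fc_smul p r x) = vact p vn vc r (f i x)"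
  using GC by (auto simp: good_cover_def)
lemma f_zero_val: "i \<in> Ip p \<Longrightarrow> f i fc_zero = 0"
proof -
  assume i: "i \<in> Ip p"
  have "f i (fc_add p fc_zero fc_zero) = f i fc_zero + f i fc_zero"
    using f_add[OF i] fc_zero_in[OF p0] by blast
  thus ?thesis by (simp add: fc_add_zero)
qed

lemma ftot_add: "x \<in> Fset p d \<Longrightarrow> y \<in> Fset p d \<Longrightarrow> ftot p f (f_add p x y) = ftot p f x + ftot p f y"
  unfolding ftot_def f_add_def by (simp add: Fset_mem f_add sum.distrib)

lemma ftot_smul: "r \<in> ZpG p \<Longrightarrow> x \<in> Fset p d \<Longrightarrow> ftot p f (f_smul p r x) = vact p vn vc r (ftot p f x)"
proof -
  assume r: "r \<in> ZpG p" and x: "x \<in> Fset p d"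
  have "ftot p f (f_smul p r x) = (\<Sum>i\<in>Ip p. vact p vn vc r (f i (x i)))"
    unfolding ftot_def f_smul_def using r x by (simp add: Fset_mem f_smul)
  also have "\<dots> = vact p vn vc r (ftot p f x)"
    unfolding ftot_def using vact_sum[OF Mod finite_Ip, where v="\<lambda>i. f i (x i)" and r=r] x f_in
    by (simp add: Fset_mem)
  finally show ?thesis .
qed

lemma U_zero: "f_zero \<in> Uker p d f"
  by (simp add: Uker_def Fset_mem f_zero_def fc_zero_in[OF p0] ftot_def f_zero_val)

lemma U_add: "x \<in> Uker p d f \<Longrightarrow> y \<in> Uker p d f \<Longrightarrow> f_add p x y \<in> Uker p d f"
  unfolding Uker_def using ftot_add
  by (auto simp: Fset_mem f_add_def Fcomp_add[OF p0] fc_add_zero)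

lemma U_smul: "r \<in> ZpG p \<Longrightarrow> x \<in> Uker p d f \<Longrightarrow> f_smul p r x \<in> Uker p d f"
  unfolding Uker_def using ftot_smul vact_zero[OF Mod]
  by (auto simp: Fset_mem f_smul_def Fcomp_smul[OF p0] fc_smul_zero)

lemma smul_kill:
  assumes a: "a \<in> IN p" and x: "x \<in> Fset p d" and i: "i = None \<or> i = Some (Nsub p)"
  shows "f_smul p a x i = fc_zero"
proof -
  have iI: "i \<in> Ip p" using i None_Ip N_Ip[OF p0] by auto
  have xi: "x i \<in> Fcomp p (d i) i" using x iI by (simp add: Fset_mem)
  show ?thesis
  proof (rule ext)
    fix k
    show "f_smul p a x i k = fc_zero k"
    proof (cases "k < d i")
      case True
      hence "x i k \<in> Lam p i" using xi by (simp add: Fcomp_def)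
      then show ?thesis using IN_kill_Lam[OF p0 a i] by (simp add: f_smul_def fc_smul_def fc_zero_def)
    next
      case False
      hence "x i k = zpg_zero" using xi by (simp add: Fcomp_def)
      then show ?thesis by (simp add: f_smul_def fc_smul_def fc_zero_def zpg_mul_zero_right)
    qed
  qed
qed

abbreviation RHS where "RHS \<equiv> {x \<in> Uker p d f. x None = fc_zero \<and> x (Some (Nsub p)) = fc_zero}"

lemma partA: "aug_prod p (IN p) (Uker p d f) \<subseteq> RHS"
proof
  fix x assume "x \<in> aug_prod p (IN p) (Uker p d f)"
  then show "x \<in> RHS"
  proof (induction rule: aug_prod.induct)
    case zero then show ?case using U_zero by (simp add: f_zero_def)
  next
    case (prod a u)
    have uF: "u \<in> Fset p d" using prod by (simp add: Uker_def)
    show ?case using U_smul[OF IN_ZpG[OF prod(1)] prod(2)] smul_kill[OF prod(1) uF] by simp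
  next
    case (add x y)
    then show ?case using U_add by (simp add: f_add_def fc_add_zero)
  qed
qed

lemma comp_zero_of_const:
  assumes a: "a \<in> Zp p" and anz: "a \<noteq> zp_zero" and x: "x \<in> Fset p d" and iI: "i \<in> Ip p"
    and z: "f_smul p (zpg_const a) x i = fc_zero"
  shows "x i = fc_zero"
proof (rule ext)
  fix k
  have xi: "x i \<in> Fcomp p (d i) i" using x iI by (simp add: Fset_mem)
  have "zpg_mul p (zpg_const a) (x i k) = zpg_zero"
    using fun_cong[OF z, of k] by (simp add: f_smul_def fc_smul_def fc_zero_def)
  thus "x i k = fc_zero k"
    using const_cancel[OF prime a anz Fcomp_ZpG[OF p0 xi]] by (simp add: fc_zero_def)
qed

lemma partB:
  assumes eq: "aug_prod p (IN p) (Uker p d f) = RHS"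
  shows "UN_torsion_free p (Uker p d f)"
  unfolding UN_torsion_free_def
proof (intro ballI impI)
  fix a x assume a: "a \<in> Zp p" and anz: "a \<noteq> zp_zero" and x: "x \<in> Uker p d f"
    and ax: "f_smul p (zpg_const a) x \<in> aug_prod p (IN p) (Uker p d f)"
  have xF: "x \<in> Fset p d" using x by (simp add: Uker_def)
  have z: "f_smul p (zpg_const a) x None = fc_zero" "f_smul p (zpg_const a) x (Some (Nsub p)) = fc_zero"
    using ax eq by auto
  have "x None = fc_zero" by (rule comp_zero_of_const[OF a anz xF None_Ip z(1)])
  moreover have "x (Some (Nsub p)) = fc_zero" by (rule comp_zero_of_const[OF a anz xF N_Ip[OF p0] z(2)])
  ultimately show "x \<in> aug_prod p (IN p) (Uker p d f)" using eq x by auto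
qed

lemma a0_cp_F:
  assumes x: "x \<in> RHS"
  shows "f_smul p (a0 p) x = f_smul p (cp p) x"
proof (rule ext, rule ext)
  fix i k
  have xF: "x \<in> Fset p d" using x by (simp add: Uker_def)
  show "f_smul p (a0 p) x i k = f_smul p (cp p) x i k"
  proof (cases "i \<in> Ip p \<and> i \<noteq> None \<and> i \<noteq> Some (Nsub p) \<and> k < d i")
    case True
    then obtain H where iH: "i = Some H" and H: "H \<in> subgroups_p p" and HN: "H \<noteq> Nsub p" and k: "k < d i"
      by (auto simp: Ip_def)
    have "x i k \<in> Lam p i" using xF True by (simp add: Fset_mem Fcomp_def)
    then show ?thesis using a0_vs_cp[OF prime H HN] iH by (simp add: f_smul_def fc_smul_def)
  next
    case False
    have "x i k = zpg_zero"
    proof (cases "i \<in> Ip p")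
      case iI: True
      have "x i \<in> Fcomp p (d i) i" using xF iI by (simp add: Fset_mem)
      then show ?thesis using False iI x by (auto simp: Fcomp_def fc_zero_def)
    next
      case False
      then show ?thesis using xF by (simp add: Fset_mem fc_zero_def)
    qed
    then show ?thesis by (simp add: f_smul_def fc_smul_def zpg_mul_zero_right)
  qed
qed

lemma partC:
  assumes tf: "UN_torsion_free p (Uker p d f)"
  shows "RHS \<subseteq> aug_prod p (IN p) (Uker p d f)"
proof
  fix x assume x: "x \<in> RHS"
  have xU: "x \<in> Uker p d f" using x by simp
  have "f_smul p (a0 p) x \<in> aug_prod p (IN p) (Uker p d f)"
    by (rule aug_prod.prod[OF a0_IN[OF p0] xU])
  hence "f_smul p (zpg_const (zp_of_int p (int p))) x \<in> aug_prod p (IN p) (Uker p d f)"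
    using a0_cp_F[OF x] by (simp add: cp_def)
  then show "x \<in> aug_prod p (IN p) (Uker p d f)"
    using tf xU cp_const_in[OF p0] cp_const_nz[OF p1] unfolding UN_torsion_free_def by blast
qed

lemma main:
  "aug_prod p (IN p) (Uker p d f) \<subseteq> RHS
   \<and> (aug_prod p (IN p) (Uker p d f) = RHS \<longleftrightarrow> UN_torsion_free p (Uker p d f))"
  using partA partB partC by blast

end

theorem mainTheorem6:
  fixes p :: nat and d :: "ix \<Rightarrow> nat"
    and V :: "'v::ab_group_add set" and vn vc :: "'v \<Rightarrow> 'v"
    and Vi :: "ix \<Rightarrow> 'v set" and f :: "ix \<Rightarrow> fcomp \<Rightarrow> 'v"
  assumes "prime p"
    and "diagram p V vn vc Vi"
    and "\<forall>i\<in>Ip p. good_cover p (d i) i vn vc (Vi i) (f i)"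
  shows "aug_prod p (IN p) (Uker p d f)
           \<subseteq> {x \<in> Uker p d f. x None = fc_zero \<and> x (Some (Nsub p)) = fc_zero}
       \<and> (aug_prod p (IN p) (Uker p d f)
            = {x \<in> Uker p d f. x None = fc_zero \<and> x (Some (Nsub p)) = fc_zero}
          \<longleftrightarrow> UN_torsion_free p (Uker p d f))"
proof -
  interpret ctx p d V vn vc Vi f using assms by (unfold_locales) auto
  show ?thesis by (rule main)
qed

end
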